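(* Let $Y$ be a linear subspace of $\mathcal H(\mathbb D)$ such that for every $h\in Y$ with $h\not\equiv0$, the zero sequence $\{\zeta_k\}$ of $h$ (counted with multiplicity) is a Blaschke sequence. Let $v$ be a weight on $\mathbb D$. Let $w\in\mathcal H(\mathbb D)$ with $w\not\equiv0$ and let $\varphi$ be an entire function with $\varphi\not\equiv 0$. Then the weighted superposition operator $S_{\varphi,w}$ maps $H^\infty_v$ into $Y$ if and only if $w\in Y$ and $\varphi$ is constant.
   Context: $\mathcal H(\mathbb D)$ is the space of analytic functions in the unit disc $\mathbb D$; $S_{\varphi,w}(f)(z)=w(z)\varphi(f(z))$ for $\varphi$ entire and $w\in\mathcal H(\mathbb D)$. A weight on $\mathbb D$ is a positive continuous function $v$ on $\mathbb D$ which is radial ($v(z)=v(|z|)$), with $r\mapsto v(r)$ strictly decreasing on $[0,1)$ and $\lim_{r\to1}v(r)=0$. $H^\infty_v=\{f\in\mathcal H(\mathbb D):\|f\|_v=\sup_{z\in\mathbb D}v(z)|f(z)|<\infty\}$. A sequence $\{z_k\}\subset\mathbb D$ is a Blaschke sequence if $\sum_k(1-|z_k|)<\infty$. *)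

theory Defs
  imports "HOL-Complex_Analysis.Complex_Analysis"
begin

text \<open>Analytic functions on the unit disc. Functions are total in HOL; a function
  f :: complex => complex represents an element of H(D) if it is holomorphic on the disc.\<close>
definition HD :: "(complex \<Rightarrow> complex) set" where
  "HD = {f. f holomorphic_on ball 0 1}"

text \<open>A linear subspace of H(D). Since elements of H(D) are functions on the disc,
  Y is required to be saturated: membership only depends on values on the disc.\<close>
definition HD_subspace :: "(complex \<Rightarrow> complex) set \<Rightarrow> bool" where
  "HD_subspace Y \<longleftrightarrow> Y \<subseteq> HD \<and> (\<lambda>z. 0) \<in> Y
     \<and> (\<forall>f\<in>Y. \<forall>g\<in>Y. (\<lambda>z. f z + g z) \<in> Y)
     \<and> (\<forall>c. \<forall>f\<in>Y. (\<lambda>z. c * f z) \<in> Y)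
     \<and> (\<forall>f g. f \<in> Y \<longrightarrow> (\<forall>z\<in>ball 0 1. g z = f z) \<longrightarrow> g \<in> Y)"

definition blaschke_zeros :: "(complex \<Rightarrow> complex) \<Rightarrow> bool" where
  "blaschke_zeros h \<longleftrightarrow>
     (\<lambda>z. real (nat (zorder h z)) * (1 - norm z)) summable_on {z \<in> ball 0 1. h z = 0}"

definition weight :: "(complex \<Rightarrow> real) \<Rightarrow> bool" where
  "weight v \<longleftrightarrow> continuous_on (ball 0 1) v
     \<and> (\<forall>z\<in>ball 0 1. v z > 0)
     \<and> (\<forall>z\<in>ball 0 1. v z = v (complex_of_real (norm z)))
     \<and> (\<forall>r s. 0 \<le> r \<and> r < s \<and> s < 1 \<longrightarrow> v (complex_of_real s) < v (complex_of_real r))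
     \<and> ((\<lambda>r. v (complex_of_real r)) \<longlongrightarrow> 0) (at_left 1)"

definition Hinf_v :: "(complex \<Rightarrow> real) \<Rightarrow> (complex \<Rightarrow> complex) set" where
  "Hinf_v v = {f. f holomorphic_on ball 0 1 \<and> (\<exists>C. \<forall>z\<in>ball 0 1. v z * norm (f z) \<le> C)}"

definition superpos_op :: "(complex \<Rightarrow> complex) \<Rightarrow> (complex \<Rightarrow> complex) \<Rightarrow> (complex \<Rightarrow> complex) \<Rightarrow> (complex \<Rightarrow> complex)" where
  "superpos_op \<phi> w f = (\<lambda>z. w z * \<phi> (f z))"

end

theory Submission
  imports Defs
begin


lemma root_bound:
  fixes z :: complex
  assumes "z ^ N = -1/2" "N > 0"
  shows "norm z < 1" "1 / (2 * real N) \<le> 1 - norm z" "z \<noteq> 0"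
proof -
  have n: "norm z ^ N = 1/2" using assms(1) by (metis norm_power norm_minus_cancel norm_divide norm_one norm_numeral)
  show "norm z < 1"
  proof (rule ccontr)
    assume "\<not> norm z < 1" then have "1 \<le> norm z ^ N" by (simp add: one_le_power)
    with n show False by simp
  qed
  have "1 + real N * (norm z - 1) \<le> (1 + (norm z - 1)) ^ N"
    by (rule Bernoulli_inequality) simp
  then have "1 + real N * norm z - real N \<le> 1/2" using n by (simp add: right_diff_distrib)
  then have "1/2 \<le> real N - real N * norm z" by simp
  then have "1/2 \<le> real N * (1 - norm z)" by (simp add: right_diff_distrib)
  then show "1 / (2 * real N) \<le> 1 - norm z" using assms(2) by (simp add: field_simps)
  show "z \<noteq> 0" using assms by (auto simp: power_0_left)
qed

lemma nonblaschke:
  fixes N :: "nat \<Rightarrow> nat" and g :: "complex \<Rightarrow> real"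
  assumes "strict_mono N" "\<And>k. N k > 0"
    and sub: "\<And>k z. z ^ (N k) = -1/2 \<Longrightarrow> z \<in> Z \<and> g z \<ge> 1 - norm z"
    and nn: "\<And>z. z \<in> Z \<Longrightarrow> g z \<ge> 0"
  shows "\<not> g summable_on Z"
proof
  assume summ: "g summable_on Z"
  define R where "R k = {z::complex. z ^ (N k) = -1/2}" for k
  have cardR: "card (R k) = N k" for k unfolding R_def by (rule card_nth_roots) (use assms(2) in auto)
  have finR: "finite (R k)" for k using cardR assms(2)[of k] by (metis card.infinite less_irrefl)
  have disj: "R j \<inter> R k = {}" if "j \<noteq> k" for j k
  proof -
    have "R j \<inter> R k = {}" if "j < k" for j k
    proof (rule ccontr)
      assume "R j \<inter> R k \<noteq> {}"
      then obtain z :: complex where z: "z ^ N j = -1/2" "z ^ N k = -1/2" unfolding R_def by auto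
      have "N j < N k" using assms(1) that by (simp add: strict_mono_less)
      have a: "norm z < 1" "z \<noteq> 0" using root_bound[OF z(1) assms(2)] by auto
      have "norm z ^ N k < norm z ^ N j"
        by (rule power_strict_decreasing) (use a \<open>N j < N k\<close> in auto)
      moreover have "norm z ^ N k = norm z ^ N j" using z by (metis norm_power)
      ultimately show False by simp
    qed
    then show ?thesis using that by (metis inf_commute linorder_neqE_nat)
  qed
  have blk: "1/2 \<le> sum g (R k)" for k
  proof -
    have "sum g (R k) \<ge> sum (\<lambda>z. 1 / (2 * real (N k))) (R k)"
    proof (rule sum_mono)
      fix z assume "z \<in> R k"
      then have z: "z ^ N k = -1/2" unfolding R_def by auto
      show "1 / (2 * real (N k)) \<le> g z" using root_bound(2)[OF z assms(2)] sub[OF z] by linarith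
    qed
    also have "sum (\<lambda>z. 1 / (2 * real (N k))) (R k) = 1/2" using cardR[of k] assms(2)[of k] by simp
    finally show ?thesis by simp
  qed
  have big: "real n / 2 \<le> infsum g Z" for n
  proof -
    have "real n / 2 = (\<Sum>k<n. 1/2)" by simp
    also have "\<dots> \<le> (\<Sum>k<n. sum g (R k))" by (rule sum_mono) (rule blk)
    also have "\<dots> = sum g (\<Union>k<n. R k)"
      by (rule sum.UNION_disjoint[symmetric]) (use finR disj in auto)
    also have "\<dots> \<le> infsum g Z"
      by (rule finite_sum_le_infsum[OF summ]) (use finR sub nn in \<open>auto simp: R_def\<close>)
    finally show ?thesis .
  qed
  have c: "2 * infsum g Z \<le> real (nat (ceiling (2 * infsum g Z)))" by linarith
  have "real (nat (ceiling (2 * infsum g Z)) + 1) / 2 \<le> infsum g Z" by (rule big)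
  then show False using c by simp
qed

lemma weightD:
  assumes "weight v"
  shows "\<And>z. z \<in> ball 0 1 \<Longrightarrow> v z > 0"
    "\<And>z. z \<in> ball 0 1 \<Longrightarrow> v z = v (complex_of_real (norm z))"
    "\<And>r s. 0 \<le> r \<Longrightarrow> r < s \<Longrightarrow> s < 1 \<Longrightarrow> v (complex_of_real s) < v (complex_of_real r)"
    "((\<lambda>r. v (complex_of_real r)) \<longlongrightarrow> 0) (at_left 1)"
proof -
  have A: "continuous_on (ball 0 1) v
     \<and> (\<forall>z\<in>ball 0 1. v z > 0)
     \<and> (\<forall>z\<in>ball 0 1. v z = v (complex_of_real (norm z)))
     \<and> (\<forall>r s. 0 \<le> r \<and> r < s \<and> s < 1 \<longrightarrow> v (complex_of_real s) < v (complex_of_real r))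
     \<and> ((\<lambda>r. v (complex_of_real r)) \<longlongrightarrow> 0) (at_left 1)" using assms unfolding weight_def .
  show "\<And>z. z \<in> ball 0 1 \<Longrightarrow> v z > 0" using A by blast
  show "\<And>z. z \<in> ball 0 1 \<Longrightarrow> v z = v (complex_of_real (norm z))" using A by blast
  show "\<And>r s. 0 \<le> r \<Longrightarrow> r < s \<Longrightarrow> s < 1 \<Longrightarrow> v (complex_of_real s) < v (complex_of_real r)" using A by blast
  show "((\<lambda>r. v (complex_of_real r)) \<longlongrightarrow> 0) (at_left 1)" using A by blast
qed

lemma weight_le0:
  assumes "weight v" "z \<in> ball 0 1"
  shows "v z \<le> v 0"
proof -
  have vz: "v z = v (complex_of_real (norm z))" using weightD(2)[OF assms] .
  show ?thesis
  proof (cases "norm z = 0")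
    case True then show ?thesis using vz by simp
  next
    case False
    then have "v (complex_of_real (norm z)) < v (complex_of_real 0)"
      using assms(2) by (intro weightD(3)[OF assms(1)]) auto
    then show ?thesis using vz by simp
  qed
qed
lemma weight_bound:
  fixes v :: "complex \<Rightarrow> real" and s :: "nat \<Rightarrow> real"
  assumes "weight v" "0 \<le> r" "r < 1"
    and s: "\<And>k x. s k < x \<Longrightarrow> x < 1 \<Longrightarrow> v (complex_of_real x) \<le> (1/4)^k"
  shows "v (complex_of_real r) * 3 ^ card {k. k < n \<and> s k < r} \<le> 3 + v 0"
proof -
  define A where "A = {k. k < n \<and> s k < r}"
  have rb: "complex_of_real r \<in> ball 0 1" using assms(2,3) by simp
  have vpos: "v (complex_of_real r) > 0" using weightD(1)[OF assms(1) rb] .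
  have v0: "v (complex_of_real r) \<le> v 0" using weight_le0[OF assms(1) rb] .
  show ?thesis
  proof (cases "A = {}")
    case True
    have "v (complex_of_real r) * 3 ^ card A \<le> 3 + v 0" using True v0 by simp
    then show ?thesis unfolding A_def .
  next
    case False
    have finA: "finite A" unfolding A_def by simp
    define m where "m = Max A"
    have mA: "m \<in> A" unfolding m_def using finA False by simp
    have "A \<subseteq> {..m}" unfolding m_def using finA by auto
    then have cA: "card A \<le> m + 1" using card_mono[of "{..m}" A] by simp
    have vm: "v (complex_of_real r) \<le> (1/4)^m" using mA s[of m r] assms(3) unfolding A_def by auto
    have p3: "(3::real) ^ card A \<le> 3 ^ (m+1)" by (rule power_increasing[OF cA]) simp
    have "v (complex_of_real r) * 3 ^ card A \<le> (1/4)^m * 3 ^ (m+1)"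
      by (rule mult_mono[OF vm p3]) auto
    also have "\<dots> = 3 * (3/4)^m" by (simp add: power_divide field_simps)
    also have "\<dots> \<le> 3 * 1" by (intro mult_left_mono power_le_one) auto
    finally have "v (complex_of_real r) * 3 ^ card A \<le> 3" by simp
    moreover have "v 0 > 0" using weightD(1)[OF assms(1), of 0] by simp
    ultimately show ?thesis unfolding A_def by simp
  qed
qed
lemma construct:
  fixes v :: "complex \<Rightarrow> real"
  assumes w: "weight v"
  obtains F :: "complex \<Rightarrow> complex" and N :: "nat \<Rightarrow> nat"
  where "F \<in> Hinf_v v" "F 0 = 1" "strict_mono N" "\<And>k. N k > 0"
    "\<And>k z. z ^ (N k) = -1/2 \<Longrightarrow> F z = 0"
proof -
  have lim: "((\<lambda>r. v (complex_of_real r)) \<longlongrightarrow> 0) (at_left 1)" using weightD(4)[OF w] .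
  have "\<exists>s. 0 \<le> s \<and> s < 1 \<and> (\<forall>x. s < x \<longrightarrow> x < 1 \<longrightarrow> v (complex_of_real x) \<le> (1/4)^k)" for k
  proof -
    have "eventually (\<lambda>r. v (complex_of_real r) < (1/4)^k) (at_left (1::real))"
      by (rule order_tendstoD(2)[OF lim]) simp
    then obtain b where b: "b < 1" "\<And>y. b < y \<Longrightarrow> y < 1 \<Longrightarrow> v (complex_of_real y) < (1/4)^k"
      unfolding eventually_at_left_field by blast
    show ?thesis by (rule exI[of _ "max b 0"]) (use b in \<open>auto intro: less_imp_le\<close>)
  qed
  then obtain s where s0: "\<And>k. 0 \<le> s k" and s1: "\<And>k. s k < 1"
    and s: "\<And>k x. s k < x \<Longrightarrow> x < 1 \<Longrightarrow> v (complex_of_real x) \<le> (1/4)^k"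
    by metis
  have "\<exists>M. s k ^ M < (1/2)^(k+1)" for k by (rule real_arch_pow_inv) (use s1 in auto)
  then obtain M where M: "\<And>k. s k ^ M k < (1/2)^(k+1)" by metis
  define N where "N k = k + 1 + (\<Sum>j\<le>k. M j)" for k
  have Npos: "N k > 0" for k unfolding N_def by simp
  have Nk: "k \<le> N k" for k unfolding N_def by simp
  have NM: "M k \<le> N k" for k unfolding N_def using member_le_sum[of k "{..k}" M] by simp
  have smN: "strict_mono N" unfolding strict_mono_Suc_iff N_def by simp
  have sN: "2 * s k ^ N k \<le> (1/2)^k" for k
  proof -
    have "s k ^ N k \<le> s k ^ M k" by (rule power_decreasing) (use NM s0 s1[of k] in \<open>auto intro: less_imp_le\<close>)
    with M[of k] show ?thesis by simp
  qed
  define P where "P n (z::complex) = (\<Prod>k<n. 1 + 2 * z ^ N k)" for n z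
  define F where "F = (\<lambda>z. lim (\<lambda>n. P n z))"
  have ul: "uniform_limit (cball 0 \<rho>) P F sequentially" if "0 \<le> \<rho>" "\<rho> < 1" for \<rho>
  proof -
    have "uniformly_convergent_on (cball 0 \<rho>) (\<lambda>n (z::complex). \<Prod>k<n. 1 + 2 * z ^ N k)"
    proof (rule uniformly_convergent_on_prod)
      show "continuous_on (cball 0 \<rho>) (\<lambda>z::complex. 2 * z ^ N k)" for k by (intro continuous_intros)
      show "compact (cball (0::complex) \<rho>)" by simp
      show "uniformly_convergent_on (cball 0 \<rho>) (\<lambda>n (z::complex). \<Sum>k<n. norm (2 * z ^ N k))"
      proof (rule Weierstrass_m_test'[where M = "\<lambda>k. 2 * \<rho> ^ k"])
        fix k and z :: complex assume z: "z \<in> cball 0 \<rho>"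
        have "norm z ^ N k \<le> \<rho> ^ N k" by (rule power_mono) (use z in auto)
        also have "\<dots> \<le> \<rho> ^ k" by (rule power_decreasing) (use Nk that in auto)
        finally show "norm (norm (2 * z ^ N k)) \<le> 2 * \<rho> ^ k" by (simp add: norm_mult norm_power)
      next
        show "summable (\<lambda>k. 2 * \<rho> ^ k)" by (rule summable_mult, rule summable_geometric) (use that in auto)
      qed
    qed
    then show ?thesis unfolding uniformly_convergent_uniform_limit_iff P_def F_def .
  qed
  have conv: "(\<lambda>n. P n z) \<longlonglongrightarrow> F z" if "norm z < 1" for z
    by (rule tendsto_uniform_limitI[OF ul[of "norm z"]]) (use that in auto)
  have hol: "F holomorphic_on ball 0 1"
  proof (rule holomorphic_uniform_sequence[where f = P])
    show "P n holomorphic_on ball 0 1" for n unfolding P_def by (intro holomorphic_intros)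
    fix x :: complex assume x: "x \<in> ball 0 1"
    show "\<exists>d>0. cball x d \<subseteq> ball 0 1 \<and> uniform_limit (cball x d) P F sequentially"
    proof (intro exI conjI)
      show "(1 - norm x) / 2 > 0" using x by simp
      have sub: "cball x ((1 - norm x) / 2) \<subseteq> cball 0 ((1 + norm x) / 2)"
      proof (rule subsetI)
        fix y assume "y \<in> cball x ((1 - norm x) / 2)"
        then have "norm (y - x) \<le> (1 - norm x) / 2" by (simp add: dist_norm norm_minus_commute)
        moreover have "norm y \<le> norm x + norm (y - x)" using norm_triangle_ineq[of x "y - x"] by simp
        ultimately show "y \<in> cball 0 ((1 + norm x) / 2)" by simp
      qed
      also have "\<dots> \<subseteq> ball 0 1" using x by auto
      finally show "cball x ((1 - norm x) / 2) \<subseteq> ball 0 1" .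
      show "uniform_limit (cball x ((1 - norm x) / 2)) P F sequentially"
        by (rule uniform_limit_on_subset[OF ul sub]) (use x in auto)
    qed
  qed simp
  have F0: "F 0 = 1"
  proof -
    have "P n 0 = 1" for n unfolding P_def
      by (rule prod.neutral) (use Npos in \<open>auto simp: power_0_left\<close>)
    then show ?thesis unfolding F_def by simp
  qed
  have Fz: "F z = 0" if z: "z ^ N k = -1/2" for k z
  proof -
    have "norm z < 1" using root_bound(1)[OF z Npos] .
    then have c: "(\<lambda>n. P n z) \<longlonglongrightarrow> F z" by (rule conv)
    have "eventually (\<lambda>n. P n z = 0) sequentially"
      unfolding eventually_sequentially
    proof (intro exI allI impI)
      fix n assume "Suc k \<le> n"
      then show "P n z = 0" unfolding P_def using z by (auto intro!: bexI[of _ k])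
    qed
    then have "(\<lambda>n. P n z) \<longlonglongrightarrow> 0" by (rule tendsto_eventually)
    with c show ?thesis using LIMSEQ_unique by blast
  qed
  have bnd: "v z * norm (F z) \<le> exp 2 * (3 + v 0)" if z: "z \<in> ball 0 1" for z
  proof -
    define r where "r = norm z"
    have r: "0 \<le> r" "r < 1" using z unfolding r_def by auto
    have vz: "v z = v (complex_of_real r)" using weightD(2)[OF w z] unfolding r_def .
    have vpos: "v z > 0" using weightD(1)[OF w z] .
    have "v z * norm (P n z) \<le> exp 2 * (3 + v 0)" for n
    proof -
      have "norm (P n z) \<le> (\<Prod>k<n. 1 + 2 * r ^ N k)"
        unfolding P_def prod_norm[symmetric]
        by (rule prod_mono) (auto simp: r_def norm_mult norm_power intro!: order.trans[OF norm_triangle_ineq])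
      also have "\<dots> \<le> (\<Prod>k<n. (1 + (1/2)^k) * (if s k < r then 3 else 1))"
      proof (rule prod_mono, safe)
        fix k
        show "0 \<le> 1 + 2 * r ^ N k" using r by simp
        show "1 + 2 * r ^ N k \<le> (1 + (1/2)^k) * (if s k < r then 3 else 1)"
        proof (cases "s k < r")
          case True
          have "r ^ N k \<le> 1" using r by (simp add: power_le_one)
          moreover have "0 \<le> (1/2::real)^k" by simp
          moreover have "(1 + (1/2::real)^k) * (if s k < r then 3 else 1) = 3 + 3 * (1/2)^k"
            using True by simp
          ultimately show ?thesis by linarith
        next
          case False
          have "r ^ N k \<le> s k ^ N k" by (rule power_mono) (use False r in auto)
          then show ?thesis using False sN[of k] by simp
        qed
      qed
      also have "\<dots> = (\<Prod>k<n. 1 + (1/2)^k) * (\<Prod>k<n. (if s k < r then 3 else 1))"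
        by (rule prod.distrib)
      also have "(\<Prod>k<n. (if s k < r then 3 else 1::real)) = 3 ^ card {k. k < n \<and> s k < r}"
      proof -
        have "(\<Prod>k<n. (if s k < r then 3 else 1::real)) = (\<Prod>k\<in>{k\<in>{..<n}. s k < r}. 3)"
          by (rule prod.inter_filter[symmetric]) simp
        also have "{k\<in>{..<n}. s k < r} = {k. k < n \<and> s k < r}" by auto
        finally show ?thesis by simp
      qed
      also have "(\<Prod>k<n. 1 + (1/2::real)^k) \<le> exp 2"
      proof -
        have "(\<Prod>k<n. 1 + (1/2::real)^k) \<le> (\<Prod>k<n. exp ((1/2)^k))"
          by (rule prod_mono) (use exp_ge_add_one_self in \<open>auto simp: add.commute\<close>)
        also have "\<dots> = exp (\<Sum>k<n. (1/2)^k)" by (simp add: exp_sum)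
        also have "(\<Sum>k<n. (1/2::real)^k) \<le> 2"
          using geometric_sum[of "1/2::real" n] by simp
        then have "exp (\<Sum>k<n. (1/2::real)^k) \<le> exp 2" by simp
        finally show ?thesis .
      qed
      ultimately have "norm (P n z) \<le> exp 2 * 3 ^ card {k. k < n \<and> s k < r}"
        by (smt (verit) mult_right_mono zero_le_power)
      then have "v z * norm (P n z) \<le> exp 2 * (v (complex_of_real r) * 3 ^ card {k. k < n \<and> s k < r})"
        using vpos vz by (simp add: mult_left_mono mult.assoc mult.left_commute)
      also have "\<dots> \<le> exp 2 * (3 + v 0)"
        by (rule mult_left_mono[OF weight_bound[OF w r s]]) auto
      finally show ?thesis .
    qed
    moreover have "(\<lambda>n. v z * norm (P n z)) \<longlonglongrightarrow> v z * norm (F z)"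
      using conv[of z] z by (intro tendsto_intros) auto
    ultimately show ?thesis by (intro LIMSEQ_le_const2) auto
  qed
  show ?thesis
  proof (rule that[of F N])
    show "F \<in> Hinf_v v" unfolding Hinf_v_def using hol bnd by blast
  qed (use F0 smN Npos Fz in auto)
qed


lemma zero_on_ball_imp:
  fixes h :: "complex \<Rightarrow> complex"
  assumes "h holomorphic_on ball 0 1" "ball c d \<subseteq> ball 0 1" "d > 0" "\<And>y. y \<in> ball c d \<Longrightarrow> h y = 0"
    and "y \<in> ball 0 1"
  shows "h y = 0"
  using analytic_continuation_open[of "ball c d" "ball 0 1" h "\<lambda>_. 0" y] assms by auto

lemma hol_freq_nonzero:
  fixes h :: "complex \<Rightarrow> complex"
  assumes hol: "h holomorphic_on ball 0 1" and z: "z \<in> ball 0 1" and nz: "\<exists>y\<in>ball 0 1. h y \<noteq> 0"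
    and hz: "h z = 0"
  shows "frequently (\<lambda>y. h y \<noteq> 0) (at z)"
proof (rule ccontr)
  assume "\<not> frequently (\<lambda>y. h y \<noteq> 0) (at z)"
  then have "eventually (\<lambda>y. h y = 0) (at z)" by (simp add: not_frequently)
  then obtain e where e: "e > 0" "\<And>y. y \<noteq> z \<Longrightarrow> dist y z < e \<Longrightarrow> h y = 0"
    unfolding eventually_at by blast
  define d where "d = min e (1 - norm z)"
  have d: "d > 0" using e z unfolding d_def by auto
  have sub: "ball z d \<subseteq> ball 0 1"
  proof
    fix y assume "y \<in> ball z d"
    then have "norm (y - z) < 1 - norm z" unfolding d_def by (simp add: dist_norm norm_minus_commute)
    moreover have "norm y \<le> norm z + norm (y - z)" using norm_triangle_ineq[of z "y - z"] by simp
    ultimately show "y \<in> ball 0 1" by simp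
  qed
  have "h y = 0" if "y \<in> ball z d" for y
  proof (cases "y = z")
    case True then show ?thesis using hz by simp
  next
    case False then show ?thesis using e(2)[of y] that unfolding d_def by (simp add: dist_commute)
  qed
  then have "h y = 0" if "y \<in> ball 0 1" for y
    by (rule zero_on_ball_imp[OF hol sub d]) (use that in auto)
  with nz show False by auto
qed

theorem corollary1:
  fixes Y :: "(complex \<Rightarrow> complex) set" and v :: "complex \<Rightarrow> real"
    and w \<phi> :: "complex \<Rightarrow> complex"
  assumes "HD_subspace Y"
    and "\<forall>h\<in>Y. (\<exists>z\<in>ball 0 1. h z \<noteq> 0) \<longrightarrow> blaschke_zeros h"
    and "weight v"
    and "w holomorphic_on ball 0 1" and "\<exists>z\<in>ball 0 1. w z \<noteq> 0"
    and "\<phi> holomorphic_on UNIV" and "\<exists>z. \<phi> z \<noteq> 0"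
  shows "(\<forall>f\<in>Hinf_v v. superpos_op \<phi> w f \<in> Y) \<longleftrightarrow> (w \<in> Y \<and> (\<exists>c. \<forall>z. \<phi> z = c))"
proof -
  note Ysub = assms(1)[unfolded HD_subspace_def]
  have Yadd: "(\<lambda>z. f z + g z) \<in> Y" if "f \<in> Y" "g \<in> Y" for f g using Ysub that by blast
  have Ysc: "(\<lambda>z. c * f z) \<in> Y" if "f \<in> Y" for c f using Ysub that by blast
  have const: "(\<lambda>_. a) \<in> Hinf_v v" for a
    unfolding Hinf_v_def
  proof (intro CollectI conjI exI ballI)
    show "(\<lambda>_. a) holomorphic_on ball 0 1" by simp
    fix z :: complex assume "z \<in> ball 0 1"
    then show "v z * norm a \<le> v 0 * norm a"
      by (intro mult_right_mono weight_le0[OF assms(3)]) auto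
  qed
  show ?thesis
  proof
    assume H: "\<forall>f\<in>Hinf_v v. superpos_op \<phi> w f \<in> Y"
    have Hc: "(\<lambda>z. w z * \<phi> a) \<in> Y" for a using H const[of a] unfolding superpos_op_def by auto
    obtain a where a: "\<phi> a \<noteq> 0" using assms(7) by blast
    have "(\<lambda>z. inverse (\<phi> a) * (w z * \<phi> a)) \<in> Y" by (rule Ysc[OF Hc])
    moreover have "(\<lambda>z. inverse (\<phi> a) * (w z * \<phi> a)) = w" using a by (auto simp: field_simps)
    ultimately have wY: "w \<in> Y" by simp
    have "\<exists>c. \<forall>z. \<phi> z = c"
    proof (rule ccontr)
      assume ncst: "\<not> (\<exists>c. \<forall>z. \<phi> z = c)"
      obtain F and N :: "nat \<Rightarrow> nat" where F: "F \<in> Hinf_v v" "F 0 = 1" "strict_mono N" "\<And>k. N k > 0"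
        "\<And>k z. z ^ (N k) = -1/2 \<Longrightarrow> F z = 0"
        using construct[OF assms(3)] by auto
      have Fhol: "F holomorphic_on ball 0 1" using F(1) unfolding Hinf_v_def by auto
      define h where "h = (\<lambda>z. w z * \<phi> (F z) + (-1) * (w z * \<phi> 0))"
      have h1: "superpos_op \<phi> w F \<in> Y" using H F(1) by blast
      have h1': "(\<lambda>z. w z * \<phi> (F z)) \<in> Y" using h1 unfolding superpos_op_def .
      have h2: "(\<lambda>z. (-1) * (w z * \<phi> 0)) \<in> Y" by (rule Ysc[OF Hc])
      have hY: "h \<in> Y" unfolding h_def by (rule Yadd[OF h1' h2])
      have phiF: "(\<lambda>z. \<phi> (F z)) holomorphic_on ball 0 1"
        using holomorphic_on_compose[OF Fhol, of \<phi>] holomorphic_on_subset[OF assms(6)]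
        by (auto simp: o_def)
      have hhol: "h holomorphic_on ball 0 1" unfolding h_def
        using assms(4) phiF by (intro holomorphic_intros) auto
      obtain z0 :: complex where z0: "z0 ^ N 0 = -1/2"
      proof -
        have "card {z::complex. z ^ N 0 = -1/2} = N 0" by (rule card_nth_roots) (use F(4) in auto)
        then have "{z::complex. z ^ N 0 = -1/2} \<noteq> {}" using F(4)[of 0] by (metis card.empty less_not_refl)
        then show ?thesis using that by blast
      qed
      have z0b: "z0 \<in> ball 0 1" using root_bound(1)[OF z0 F(4)] by simp
      have hnz: "\<exists>z\<in>ball 0 1. h z \<noteq> 0"
      proof (rule ccontr)
        assume "\<not> (\<exists>z\<in>ball 0 1. h z \<noteq> 0)"
        then have h0: "\<And>z. z \<in> ball 0 1 \<Longrightarrow> h z = 0" by auto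
        obtain z1 where z1: "z1 \<in> ball 0 1" "w z1 \<noteq> 0" using assms(5) by blast
        have "continuous_on (ball 0 1) w" by (rule holomorphic_on_imp_continuous_on[OF assms(4)])
        then have "isCont w z1" using z1(1) continuous_on_eq_continuous_at[OF open_ball] by blast
        then obtain e where e: "e > 0" "\<And>y. dist z1 y < e \<Longrightarrow> w y \<noteq> 0"
          using continuous_at_avoid[of z1 w 0] z1(2) by blast
        define d where "d = min e (1 - norm z1)"
        have d: "d > 0" using e z1 unfolding d_def by auto
        have sub: "ball z1 d \<subseteq> ball 0 1"
        proof
          fix y assume "y \<in> ball z1 d"
          then have "norm (y - z1) < 1 - norm z1" unfolding d_def by (simp add: dist_norm norm_minus_commute)
          moreover have "norm y \<le> norm z1 + norm (y - z1)" using norm_triangle_ineq[of z1 "y - z1"] by simp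
          ultimately show "y \<in> ball 0 1" by simp
        qed
        have g0: "\<phi> (F y) - \<phi> 0 = 0" if "y \<in> ball 0 1" for y
        proof (rule zero_on_ball_imp[where h = "\<lambda>y. \<phi> (F y) - \<phi> 0", OF _ sub d _ that])
          show "(\<lambda>y. \<phi> (F y) - \<phi> 0) holomorphic_on ball 0 1" using phiF by (intro holomorphic_intros)
          fix y assume y: "y \<in> ball z1 d"
          then have "w y \<noteq> 0" using e(2)[of y] unfolding d_def by simp
          moreover have "h y = 0" using h0 sub y by auto
          ultimately show "\<phi> (F y) - \<phi> 0 = 0" unfolding h_def by (simp add: algebra_simps)
        qed
        define U where "U = F ` ball 0 1"
        have Ucon: "connected U" unfolding U_def
          by (rule connected_continuous_image) (use Fhol holomorphic_on_imp_continuous_on in auto)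
        have U0: "0 \<in> U" "1 \<in> U" unfolding U_def using F(2) F(5)[OF z0] z0b by (auto intro!: image_eqI)
        have lp: "0 islimpt U"
          by (rule connected_imp_perfect[OF Ucon U0(1)]) (use U0 in auto)
        have "\<phi> x - \<phi> 0 = 0" for x
        proof (rule analytic_continuation[where f = "\<lambda>x. \<phi> x - \<phi> 0" and S = UNIV and U = U and \<xi> = 0])
          show "(\<lambda>x. \<phi> x - \<phi> 0) holomorphic_on UNIV" using assms(6) by (intro holomorphic_intros)
          show "\<And>z. z \<in> U \<Longrightarrow> \<phi> z - \<phi> 0 = 0" unfolding U_def using g0 by auto
        qed (use lp in auto)
        then show False using ncst by auto
      qed
      have bz: "blaschke_zeros h" using assms(2) hY hnz by blast
      have "\<not> (\<lambda>z. real (nat (zorder h z)) * (1 - norm z)) summable_on {z \<in> ball 0 1. h z = 0}"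
      proof (rule nonblaschke[OF F(3,4)])
        fix k and z :: complex assume z: "z ^ N k = -1/2"
        have zb: "z \<in> ball 0 1" using root_bound(1)[OF z F(4)] by simp
        have hz: "h z = 0" unfolding h_def using F(5)[OF z] by simp
        have "zorder h z > 0"
          using zorder_pos_iff[OF hhol open_ball zb hol_freq_nonzero[OF hhol zb hnz hz]] hz by simp
        then have "1 \<le> real (nat (zorder h z))" by simp
        moreover have "0 \<le> 1 - norm z" using zb by simp
        ultimately have "1 * (1 - norm z) \<le> real (nat (zorder h z)) * (1 - norm z)"
          by (rule mult_right_mono)
        then show "z \<in> {z \<in> ball 0 1. h z = 0} \<and> 1 - norm z \<le> real (nat (zorder h z)) * (1 - norm z)"
          using zb hz by simp
      next
        fix z assume "z \<in> {z \<in> ball 0 1. h z = 0}"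
        then show "0 \<le> real (nat (zorder h z)) * (1 - norm z)" by simp
      qed
      with bz show False unfolding blaschke_zeros_def by simp
    qed
    with wY show "w \<in> Y \<and> (\<exists>c. \<forall>z. \<phi> z = c)" by blast
  next
    assume "w \<in> Y \<and> (\<exists>c. \<forall>z. \<phi> z = c)"
    then obtain c where wY: "w \<in> Y" and c: "\<And>z. \<phi> z = c" by blast
    show "\<forall>f\<in>Hinf_v v. superpos_op \<phi> w f \<in> Y"
    proof
      fix f
      have "(\<lambda>z. c * w z) \<in> Y" by (rule Ysc[OF wY])
      moreover have "superpos_op \<phi> w f = (\<lambda>z. c * w z)" unfolding superpos_op_def c by (simp add: mult.commute)
      ultimately show "superpos_op \<phi> w f \<in> Y" by simp
    qed
  qed
qed


end
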